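(* Let $k\ge 1$, $0\le r<k$ and $n\ge1$ be integers, and let $$A_n(k,r,x;q)=\left(q^{(k-r-1)j}\begin{bmatrix} i-k+r+1\\ j\end{bmatrix}_q x^k+q^{(k-r)j}\begin{bmatrix} i+r+1\\ j+1\end{bmatrix}_q\right)_{i,j=0}^{n-1}.$$ Then $x^r\det A_n(k,r,x;q)=F^{(k)}_{kn+r}(x;q)$.
   Context: Here $q$ is an indeterminate and all quantities lie in $\mathbb{Q}(q)[x]$. The $q$-binomial coefficient is defined for integers $m$ (possibly negative) and $j$ by $\begin{bmatrix} m\\ j\end{bmatrix}_q=\prod_{t=0}^{j-1}\frac{1-q^{m-t}}{1-q^{t+1}}$ if $j\ge0$ and $0$ if $j<0$. For an integer $k\ge1$, the $q$-Fibonacci polynomials $F^{(k)}_n(x;q)$ ($n\ge0$) are defined by $F^{(k)}_n(x;q)=x^n$ for $0\le n<k$ and $F^{(k)}_{n+k}(x;q)=xF^{(k)}_{n+k-1}(x;q)+q^nF^{(k)}_n(x;q)$ for $n\ge0$. *)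

theory Defs
  imports "HOL-Computational_Algebra.Polynomial" "HOL-Computational_Algebra.Fraction_Field"
    "Jordan_Normal_Form.Determinant"
begin

type_synonym qfield = "rat poly fract"

definition qv :: qfield where
  "qv = Fract [:0, 1:] 1"

definition qbinom :: "int \<Rightarrow> int \<Rightarrow> qfield" where
  "qbinom m j = (if j < 0 then 0 else
     (\<Prod>t = 0..<nat j. (1 - qv powi (m - int t)) / (1 - qv ^ (t + 1))))"

text \<open>F_n = x^n for n < k, and F_n = x F_(n-1) + q^(n-k) F_(n-k) for n \<ge> k.
  (The case k = 0 is a dummy value, excluded by the hypotheses.)\<close>
function qfib :: "nat \<Rightarrow> nat \<Rightarrow> qfield poly" where
  "qfib k n = (if k = 0 \<or> n < k then monom 1 n
               else monom 1 1 * qfib k (n - 1) + smult (qv ^ (n - k)) (qfib k (n - k)))"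
  by pat_completeness auto
termination by (relation "measure snd") auto

definition A_mat :: "nat \<Rightarrow> nat \<Rightarrow> nat \<Rightarrow> qfield poly mat" where
  "A_mat n k r = mat n n (\<lambda>(i, j).
      smult (qv ^ ((k - r - 1) * j) * qbinom (int i - int k + int r + 1) (int j)) (monom 1 k)
      + [: qv ^ ((k - r) * j) * qbinom (int i + int r + 1) (int j + 1) :])"

end

theory Submission
  imports Defs
begin

lemma qv_nz[simp]: "qv \<noteq> 0" unfolding qv_def by (simp add: Zero_fract_def eq_fract)

lemma qv_pow: "qv ^ n = Fract ([:0,1:]^n) 1"
  by (induct n) (auto simp: qv_def One_fract_def)

lemma qv_pow_neq1: assumes "n > 0" shows "qv ^ n \<noteq> 1"
proof
  assume "qv ^ n = 1"
  hence "[:0,1::rat:]^n = 1" by (simp add: qv_pow One_fract_def eq_fract)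
  hence "degree ([:0,1::rat:]^n) = 0" by simp
  moreover have "degree ([:0,1::rat:]^n) = n" by (simp add: degree_power_eq)
  ultimately show False using assms by simp
qed

lemma den_nz[simp]: "1 - qv ^ Suc t \<noteq> 0"
  using qv_pow_neq1[of "Suc t"] by auto

definition pp :: "int \<Rightarrow> nat \<Rightarrow> qfield" where
  "pp m s = (\<Prod>t = 0..<s. 1 - qv powi (m - int t))"
definition dd :: "nat \<Rightarrow> qfield" where
  "dd s = (\<Prod>t = 0..<s. 1 - qv ^ (t + 1))"

lemma dd_nz[simp]: "dd s \<noteq> 0" unfolding dd_def using den_nz by (auto simp: prod_zero_iff simp del: power_Suc)

lemma qbinom_nat: "qbinom m (int s) = pp m s / dd s"
  unfolding qbinom_def pp_def dd_def by (simp add: prod_dividef)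

lemma qbinom_neg[simp]: "j < 0 \<Longrightarrow> qbinom m j = 0" unfolding qbinom_def by simp
lemma qbinom_0[simp]: "qbinom m 0 = 1" unfolding qbinom_def by simp

lemma pp_Suc1: "pp m (Suc s) = pp m s * (1 - qv powi (m - int s))"
  unfolding pp_def by simp
lemma pp_Suc2: "pp m (Suc s) = (1 - qv powi m) * pp (m - 1) s"
  unfolding pp_def by (subst prod.atLeast0_lessThan_Suc_shift) (simp add: algebra_simps)
lemma dd_Suc: "dd (Suc s) = dd s * (1 - qv ^ (Suc s))"
  unfolding dd_def by simp

lemma powi_add: "qv powi (a + b) = qv powi a * qv powi b"
  by (simp add: power_int_add)

lemma qbinom_pascal: "qbinom m j = qbinom (m - 1) j + qv powi (m - j) * qbinom (m - 1) (j - 1)"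
proof (cases "j \<le> 0")
  case True
  then show ?thesis by (cases "j = 0") auto
next
  case False
  then obtain s where j: "j = int (Suc s)" by (metis gr0_implies_Suc not_le zero_less_imp_eq_int of_nat_0_less_iff)
  define P where "P = pp (m - 1) s"
  have e1: "pp m (Suc s) = (1 - qv powi m) * P" using pp_Suc2 P_def by simp
  have e2: "pp (m - 1) (Suc s) = P * (1 - qv powi (m - 1 - int s))" using pp_Suc1 P_def by simp
  have e3: "qv powi (m - j) * qv ^ Suc s = qv powi m"
    by (simp add: j power_int_add[symmetric] flip: power_int_of_nat)
  have "qbinom m j = pp m (Suc s) / (dd s * (1 - qv ^ Suc s))" unfolding j qbinom_nat dd_Suc ..
  also have "\<dots> = (pp (m - 1) (Suc s) + qv powi (m - j) * P * (1 - qv ^ Suc s)) / (dd s * (1 - qv ^ Suc s))"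
    unfolding e1 e2 using e3 by (simp add: algebra_simps j)
  also have "\<dots> = qbinom (m - 1) j + qv powi (m - j) * qbinom (m - 1) (j - 1)"
  proof -
    have a: "qbinom (m - 1) j = pp (m - 1) (Suc s) / (dd s * (1 - qv ^ Suc s))" unfolding j qbinom_nat dd_Suc ..
    have b: "qbinom (m - 1) (j - 1) = P / dd s" using qbinom_nat[of "m - 1" s] by (simp add: j P_def)
    have c: "(1 - qv ^ Suc s) \<noteq> 0" by (rule den_nz)
    show ?thesis unfolding a b add_divide_distrib using c by simp
  qed
  finally show ?thesis .
qed

lemma powi_eq: "a + b = c \<Longrightarrow> qv powi a * qv powi b = qv powi c"
  by (simp add: power_int_add[symmetric])

lemma pp_zero: "l > N \<Longrightarrow> pp (int N) l = 0"
  unfolding pp_def by (rule prod_zero) (auto intro!: bexI[of _ N])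

lemma qbinom_zero: "l > N \<Longrightarrow> qbinom (int N) (int l) = 0"
  by (simp add: qbinom_nat pp_zero)

lemma qbinom_pascal_nat: "qbinom (int (Suc N)) (int (Suc l)) = qbinom (int N) (int (Suc l)) + qv powi (int N - int l) * qbinom (int N) (int l)"
  using qbinom_pascal[of "int (Suc N)" "int (Suc l)"] by simp

definition U :: "int \<Rightarrow> nat \<Rightarrow> nat \<Rightarrow> qfield" where
  "U m l j = qbinom m (int j - int l) * qv powi (int l * (m - int j + int l))"

lemma U_shift: "qv powi (int N - int l) * U M (Suc l) (Suc e) = qv powi (int N + M + 1 - int (Suc e)) * U M l e"
proof -
  have "qv powi (int N - int l) * U M (Suc l) (Suc e) = qbinom M (int e - int l) * (qv powi (int N - int l) * qv powi (int (Suc l) * (M - int (Suc e) + int (Suc l))))"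
    unfolding U_def by simp
  also have "qv powi (int N - int l) * qv powi (int (Suc l) * (M - int (Suc e) + int (Suc l))) = qv powi (int N + M + 1 - int (Suc e)) * qv powi (int l * (M - int e + int l))"
    by (simp add: powi_eq) (simp add: algebra_simps)
  finally show ?thesis unfolding U_def by simp
qed

lemma vandermonde: "qbinom (int N + M) (int d) = (\<Sum>l = 0..d. qbinom (int N) (int l) * U M l d)"
proof (induct N arbitrary: d)
  case 0
  have z: "l \<noteq> 0 \<Longrightarrow> qbinom 0 (int l) = 0" for l using qbinom_zero[of 0 l] by simp
  have "(\<Sum>l = 0..d. qbinom (int 0) (int l) * U M l d) = (\<Sum>l\<in>{0}. qbinom (int 0) (int l) * U M l d)"
    by (rule sum.mono_neutral_right) (auto simp: z)
  then show ?case by (simp add: U_def)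
next
  case (Suc N)
  show ?case
  proof (cases d)
    case 0
    then show ?thesis by (simp add: U_def)
  next
    case (Suc e)
    have "qbinom (int (Suc N) + M) (int d) = qbinom (int N + M) (int d) + qv powi (int N + M + 1 - int d) * qbinom (int N + M) (int e)"
      using qbinom_pascal[of "int (Suc N) + M" "int d"] by (simp add: Suc algebra_simps)
    also have "\<dots> = (\<Sum>l = 0..d. qbinom (int N) (int l) * U M l d) + qv powi (int N + M + 1 - int d) * (\<Sum>l = 0..e. qbinom (int N) (int l) * U M l e)"
      using Suc.hyps by simp
    also have "qv powi (int N + M + 1 - int d) * (\<Sum>l = 0..e. qbinom (int N) (int l) * U M l e) = (\<Sum>l = 0..e. qv powi (int N - int l) * qbinom (int N) (int l) * U M (Suc l) d)"
      unfolding sum_distrib_left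
    proof (rule sum.cong[OF refl])
      fix l
      have "qv powi (int N + M + 1 - int d) * U M l e = qv powi (int N - int l) * U M (Suc l) d"
        using U_shift[of N l M e] by (simp add: Suc)
      note eq = this
      show "qv powi (int N + M + 1 - int d) * (qbinom (int N) (int l) * U M l e) = qv powi (int N - int l) * qbinom (int N) (int l) * U M (Suc l) d"
      proof -
        have "qv powi (int N + M + 1 - int d) * (qbinom (int N) (int l) * U M l e) = qbinom (int N) (int l) * (qv powi (int N + M + 1 - int d) * U M l e)" by (simp only: mult_ac)
        also have "\<dots> = qbinom (int N) (int l) * (qv powi (int N - int l) * U M (Suc l) d)" using eq by simp
        finally show ?thesis by (simp only: mult_ac)
      qed
    qed
    also have "\<dots> = (\<Sum>l = 0..d. (if l = 0 then 0 else qv powi (int N - int (l - 1)) * qbinom (int N) (int (l - 1))) * U M l d)"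
      unfolding Suc by (subst sum.atLeast0_atMost_Suc_shift) simp
    also have "(\<Sum>l = 0..d. qbinom (int N) (int l) * U M l d) + \<dots> = (\<Sum>l = 0..d. qbinom (int (Suc N)) (int l) * U M l d)"
      unfolding sum.distrib[symmetric]
    proof (rule sum.cong[OF refl])
      fix l assume "l \<in> {0..d}"
      show "qbinom (int N) (int l) * U M l d + (if l = 0 then 0 else qv powi (int N - int (l - 1)) * qbinom (int N) (int (l - 1))) * U M l d = qbinom (int (Suc N)) (int l) * U M l d"
      proof (cases l)
        case 0 then show ?thesis by simp
      next
        case (Suc l') then show ?thesis using qbinom_pascal_nat[of N l'] by (simp add: algebra_simps)
      qed
    qed
    finally show ?thesis .
  qed
qed

section \<open>Generic determinant lemmas\<close>

lemma det_diag_scale: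
  fixes N :: "nat \<Rightarrow> nat \<Rightarrow> 'a::comm_ring_1"
  shows "det (mat n n (\<lambda>(l,j). a l * b j * N l j)) = (\<Prod>l<n. a l) * (\<Prod>j<n. b j) * det (mat n n (\<lambda>(l,j). N l j))"
proof -
  define Da where "Da = mat n n (\<lambda>(l,j). if l = j then a l else 0)"
  define Db where "Db = mat n n (\<lambda>(l,j). if l = j then b l else 0)"
  define NN where "NN = mat n n (\<lambda>(l,j). N l j)"
  have Da: "Da \<in> carrier_mat n n" and Db: "Db \<in> carrier_mat n n" and NN: "NN \<in> carrier_mat n n"
    by (auto simp: Da_def Db_def NN_def)
  have eq: "mat n n (\<lambda>(l,j). a l * b j * N l j) = Da * NN * Db"
  proof (rule eq_matI)
    fix i j assume i: "i < dim_row (Da * NN * Db)" and j: "j < dim_col (Da * NN * Db)"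
    hence i: "i < n" and j: "j < n" using Da Db NN by auto
    have "(Da * NN * Db) $$ (i,j) = (\<Sum>m<n. (Da * NN) $$ (i,m) * Db $$ (m,j))"
      using i j Da Db NN by (simp add: scalar_prod_def atLeast0LessThan del: assoc_mult_mat)
    also have "\<dots> = (Da * NN) $$ (i,j) * b j"
      by (subst sum.remove[of _ j]) (use j in \<open>auto simp: Db_def intro!: sum.neutral\<close>)
    also have "(Da * NN) $$ (i,j) = (\<Sum>m<n. Da $$ (i,m) * NN $$ (m,j))"
      using i j Da Db NN by (simp add: scalar_prod_def atLeast0LessThan del: assoc_mult_mat)
    also have "\<dots> = a i * N i j"
      by (subst sum.remove[of _ i]) (use i j in \<open>auto simp: Da_def NN_def intro!: sum.neutral\<close>)
    finally show "mat n n (\<lambda>(l,j). a l * b j * N l j) $$ (i,j) = (Da * NN * Db) $$ (i,j)"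
      using i j by (simp add: mult_ac)
  qed (use Da Db NN in auto)
  have "det Da = (\<Prod>l<n. a l)"
    by (subst det_upper_triangular[OF _ Da]) (auto simp: Da_def prod_list_diag_prod atLeast0LessThan intro!: upper_triangularI)
  moreover have "det Db = (\<Prod>l<n. b l)"
    by (subst det_upper_triangular[OF _ Db]) (auto simp: Db_def prod_list_diag_prod atLeast0LessThan intro!: upper_triangularI)
  ultimately show ?thesis unfolding eq NN_def[symmetric]
    using Da Db NN by (simp add: det_mult[of _ n] mult_ac)
qed

lemma hess_rec:
  fixes c :: "nat \<Rightarrow> nat \<Rightarrow> 'a::comm_ring_1" and w :: "nat \<Rightarrow> 'a"
  assumes z: "\<And>j. j < n \<Longrightarrow> c (Suc n) j = 0"
  shows "det (mat (Suc n) (Suc n) (\<lambda>(l,j). w l * c l j + c (Suc l) j))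
    = (\<Prod>l<Suc n. w l) * det (mat (Suc n) (Suc n) (\<lambda>(l,j). c l j))
      + c (Suc n) n * det (mat n n (\<lambda>(l,j). w l * c l j + c (Suc l) j))"
proof -
  define M where "M = mat (Suc n) (Suc n) (\<lambda>(l,j). w l * c l j + c (Suc l) j)"
  define CC where "CC = mat (Suc n) (Suc n) (\<lambda>(l,j). c l j)"
  define E where "E = mat (Suc n) (Suc n) (\<lambda>(l,j). if j = l then w l else if j = Suc l then 1 else (0::'a))"
  define B where "B = E * CC"
  have M: "M \<in> carrier_mat (Suc n) (Suc n)" and CC: "CC \<in> carrier_mat (Suc n) (Suc n)"
    and E: "E \<in> carrier_mat (Suc n) (Suc n)" and B: "B \<in> carrier_mat (Suc n) (Suc n)"
    by (auto simp: M_def CC_def E_def B_def)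
  have Bij: "B $$ (l,j) = w l * c l j + (if l < n then c (Suc l) j else 0)" if l: "l < Suc n" and j: "j < Suc n" for l j
  proof -
    have "B $$ (l,j) = (\<Sum>m<Suc n. E $$ (l,m) * c m j)"
      using l j by (simp add: B_def E_def CC_def scalar_prod_def atLeast0LessThan)
    also have "\<dots> = (\<Sum>m\<in>{l} \<union> (if l < n then {Suc l} else {}). E $$ (l,m) * c m j)"
      by (rule sum.mono_neutral_right) (use l in \<open>auto simp: E_def\<close>)
    also have "\<dots> = w l * c l j + (if l < n then c (Suc l) j else 0)"
      using l by (auto simp: E_def)
    finally show ?thesis .
  qed
  have detE: "det E = (\<Prod>l<Suc n. w l)"
    by (subst det_upper_triangular[OF _ E]) (auto simp: E_def prod_list_diag_prod atLeast0LessThan intro!: upper_triangularI)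
  have detB: "det B = (\<Prod>l<Suc n. w l) * det CC"
    unfolding B_def using det_mult[OF E CC] detE by simp
  have del: "mat_delete M n j = mat_delete B n j" if "j < Suc n" for j
    by (rule eq_matI) (use M B in \<open>auto simp: mat_delete_def Bij M_def\<close>)
  have "det M = (\<Sum>j<Suc n. M $$ (n,j) * cofactor M n j)"
    by (rule laplace_expansion_row[OF M]) simp
  also have "\<dots> = (\<Sum>j<Suc n. B $$ (n,j) * cofactor B n j + c (Suc n) j * cofactor M n j)"
  proof (rule sum.cong[OF refl])
    fix j assume "j \<in> {..<Suc n}"
    hence j: "j < Suc n" by simp
    have cf: "cofactor M n j = cofactor B n j" unfolding cofactor_def del[OF j] ..
    have "M $$ (n,j) = B $$ (n,j) + c (Suc n) j" using j by (simp add: Bij M_def)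
    then show "M $$ (n,j) * cofactor M n j = B $$ (n,j) * cofactor B n j + c (Suc n) j * cofactor M n j"
      by (simp add: cf algebra_simps)
  qed
  also have "\<dots> = det B + (\<Sum>j<Suc n. c (Suc n) j * cofactor M n j)"
    unfolding sum.distrib laplace_expansion_row[OF B, of n, symmetric, OF lessI] ..
  also have "(\<Sum>j<Suc n. c (Suc n) j * cofactor M n j) = c (Suc n) n * cofactor M n n"
    by (subst sum.lessThan_Suc) (simp add: z)
  also have "cofactor M n n = det (mat n n (\<lambda>(l,j). w l * c l j + c (Suc l) j))"
  proof -
    have "mat_delete M n n = mat n n (\<lambda>(l,j). w l * c l j + c (Suc l) j)"
      by (rule eq_matI) (auto simp: mat_delete_def M_def)
    moreover have "(-1::'a) ^ (n + n) = 1" by (simp add: mult_2[symmetric])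
    ultimately show ?thesis unfolding cofactor_def by simp
  qed
  finally show ?thesis unfolding M_def[symmetric] CC_def[symmetric] detB by simp
qed

lemma first_row_expand:
  fixes M :: "'a::comm_ring_1 mat"
  assumes M: "M \<in> carrier_mat (Suc n) (Suc n)" and z: "\<And>j. 0 < j \<Longrightarrow> j < Suc n \<Longrightarrow> M $$ (0,j) = 0"
  shows "det M = M $$ (0,0) * det (mat n n (\<lambda>(l,j). M $$ (Suc l, Suc j)))"
proof -
  have "det M = (\<Sum>j<Suc n. M $$ (0,j) * cofactor M 0 j)"
    by (rule laplace_expansion_row[OF M]) simp
  also have "\<dots> = M $$ (0,0) * cofactor M 0 0"
    by (subst sum.lessThan_Suc_shift) (simp add: z)
  also have "mat_delete M 0 0 = mat n n (\<lambda>(l,j). M $$ (Suc l, Suc j))"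
    by (rule eq_matI) (use M in \<open>auto simp: mat_delete_def\<close>)
  hence "cofactor M 0 0 = det (mat n n (\<lambda>(l,j). M $$ (Suc l, Suc j)))" by (simp add: cofactor_def)
  finally show ?thesis .
qed

section \<open>The matrix U\<close>

lemma U_below[simp]: "j < l \<Longrightarrow> U m l j = 0" unfolding U_def by simp

lemma U_diag[simp]: "U m l l = qv powi (int l * m)" unfolding U_def by simp

lemma powi_eq2: "a + b = c + e \<Longrightarrow> qv powi a * qv powi b = qv powi c * qv powi e"
  by (simp add: power_int_add[symmetric])

lemma U_rec: "U m l j = qv ^ l * U (m - 1) l j + U (m - 1) (Suc l) j"
proof -
  define d where "d = int j - int l"
  define E where "E = int l * (m - int j + int l)"
  have p: "qbinom m d = qbinom (m - 1) d + qv powi (m - d) * qbinom (m - 1) (d - 1)"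
    by (rule qbinom_pascal)
  have a: "qv ^ l * U (m - 1) l j = qbinom (m - 1) d * qv powi E"
  proof -
    have "qv ^ l * U (m - 1) l j = qbinom (m - 1) d * (qv powi int l * qv powi (int l * (m - 1 - int j + int l)))"
      by (simp add: U_def d_def power_int_of_nat)
    also have "qv powi int l * qv powi (int l * (m - 1 - int j + int l)) = qv powi E"
      by (rule powi_eq) (simp add: E_def algebra_simps)
    finally show ?thesis .
  qed
  have b: "U (m - 1) (Suc l) j = qbinom (m - 1) (d - 1) * (qv powi (m - d) * qv powi E)"
  proof -
    have "U (m - 1) (Suc l) j = qbinom (m - 1) (d - 1) * qv powi (int (Suc l) * (m - 1 - int j + int (Suc l)))"
      by (simp add: U_def d_def algebra_simps)
    also have "qv powi (int (Suc l) * (m - 1 - int j + int (Suc l))) = qv powi (m - d) * qv powi E"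
      by (rule powi_eq[symmetric]) (simp add: E_def d_def algebra_simps)
    finally show ?thesis .
  qed
  have "U m l j = qbinom m d * qv powi E" by (simp add: U_def d_def E_def)
  then show ?thesis unfolding a b p by (simp add: algebra_simps)
qed

lemma U_inv_term: "U (- int K) l (s + l) * U (int K) (s + l) (l + (t + s)) = qv powi (int (t+s) * (int K - int l)) * (qbinom (int K) (int t) * U (- int K) t (t + s))"
proof -
  have "U (- int K) l (s + l) * U (int K) (s + l) (l + (t + s)) = (qbinom (- int K) (int s) * qbinom (int K) (int t)) * (qv powi (int l * (- int K - int (s + l) + int l)) * qv powi (int (s + l) * (int K - int (l + (t + s)) + int (s + l))))"
    by (simp add: U_def ac_simps)
  also have "qv powi (int l * (- int K - int (s + l) + int l)) * qv powi (int (s + l) * (int K - int (l + (t + s)) + int (s + l))) = qv powi (int (t+s) * (int K - int l)) * qv powi (int t * (- int K - int (t + s) + int t))"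
    by (rule powi_eq2) (simp add: algebra_simps)
  also have "(qbinom (- int K) (int s) * qbinom (int K) (int t)) * (qv powi (int (t+s) * (int K - int l)) * qv powi (int t * (- int K - int (t + s) + int t))) = qv powi (int (t+s) * (int K - int l)) * (qbinom (int K) (int t) * U (- int K) t (t + s))"
    by (simp add: U_def ac_simps)
  finally show ?thesis .
qed

lemma U_inv_aux: "(\<Sum>m = l..l + d. U (- int K) l m * U (int K) m (l + d)) = (if d = 0 then 1 else 0)"
proof -
  have "(\<Sum>m = l..l + d. U (- int K) l m * U (int K) m (l + d)) = (\<Sum>s = 0..d. U (- int K) l (s + l) * U (int K) (s + l) (l + d))"
    using sum.shift_bounds_cl_nat_ivl[of "\<lambda>m. U (- int K) l m * U (int K) m (l + d)" 0 l d] by (simp add: add.commute)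
  also have "\<dots> = (\<Sum>t = 0..d. U (- int K) l (d - t + l) * U (int K) (d - t + l) (l + d))"
    by (subst sum.atLeastAtMost_rev) simp
  also have "\<dots> = (\<Sum>t = 0..d. qv powi (int d * (int K - int l)) * (qbinom (int K) (int t) * U (- int K) t d))"
  proof (rule sum.cong[OF refl])
    fix t assume "t \<in> {0..d}"
    then obtain s where d: "d = t + s" using le_Suc_ex by auto
    show "U (- int K) l (d - t + l) * U (int K) (d - t + l) (l + d) = qv powi (int d * (int K - int l)) * (qbinom (int K) (int t) * U (- int K) t d)"
      using U_inv_term[of K l s t] unfolding d by simp
  qed
  also have "\<dots> = qv powi (int d * (int K - int l)) * qbinom (int K + - int K) (int d)"
  proof -
    have "(\<Sum>t=0..d. qbinom (int K) (int t) * U (- int K) t d) = qbinom (int K + - int K) (int d)"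
      by (rule vandermonde[symmetric])
    then show ?thesis by (simp add: sum_distrib_left[symmetric])
  qed
  also have "\<dots> = (if d = 0 then 1 else 0)"
    using qbinom_zero[of 0 d] by simp
  finally show ?thesis .
qed

lemma U_inv: assumes "l < N" "j < N"
  shows "(\<Sum>m<N. U (- int K) l m * U (int K) m j) = (if l = j then 1 else 0)"
proof (cases "l \<le> j")
  case True
  then obtain d where j: "j = l + d" using le_Suc_ex by blast
  have "(\<Sum>m<N. U (- int K) l m * U (int K) m j) = (\<Sum>m = l..l + d. U (- int K) l m * U (int K) m j)"
    by (rule sum.mono_neutral_right) (use assms j in auto)
  also have "\<dots> = (if d = 0 then 1 else 0)" unfolding j by (rule U_inv_aux)
  finally show ?thesis using j by simp
next
  case False
  then show ?thesis by (auto intro!: sum.neutral simp: not_le) (metis U_below mult_zero_left mult_zero_right not_less_iff_gr_or_eq less_trans)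
qed

lemma cp_add: "[:a + b:] = [:a:] + [:b:]" by simp
lemma cp_mult: "[:a * b:] = [:a:] * [:b:]" by (rule mult_to_poly[symmetric])
lemma cp_sum: "[:sum f A:] = (\<Sum>x\<in>A. [:f x:])"
  by (induct A rule: infinite_finite_induct) (simp_all add: cp_add)
lemma cp_prod: "[:prod f A:] = (\<Prod>x\<in>A. [:f x:])"
  by (induct A rule: infinite_finite_induct) (simp_all add: cp_mult)

lemma cp_lin: "[:a:] * (X * [:b:] + [:c:]) = smult (a * b) X + [:a * c:]"
  by (simp add: distrib_left mult.commute)

section \<open>The matrices C\<close>

definition Cm :: "nat \<Rightarrow> qfield poly \<Rightarrow> int \<Rightarrow> nat \<Rightarrow> nat \<Rightarrow> qfield poly" where
  "Cm K X r l j = [:U (r + 1 - int K) l j:] * X + [:U (r + 1) l (Suc j) * qv ^ j:]"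

definition EE :: "nat \<Rightarrow> qfield poly \<Rightarrow> int \<Rightarrow> nat \<Rightarrow> qfield poly" where
  "EE K X r n = det (mat n n (\<lambda>(l,j). Cm K X r l j))"

lemma C_rec: "Cm K X r l j = [:qv ^ l:] * Cm K X (r - 1) l j + Cm K X (r - 1) (Suc l) j"
proof -
  have a: "U (r + 1 - int K) l j = qv ^ l * U (r - 1 + 1 - int K) l j + U (r - 1 + 1 - int K) (Suc l) j"
    using U_rec[of "r + 1 - int K" l j] by simp
  have b: "U (r + 1) l (Suc j) = qv ^ l * U (r - 1 + 1) l (Suc j) + U (r - 1 + 1) (Suc l) (Suc j)"
    using U_rec[of "r + 1" l "Suc j"] by simp
  show ?thesis unfolding Cm_def a b cp_add cp_mult by (simp add: algebra_simps smult_add_left)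
qed

lemma R1: "EE K X (int r) (Suc n) = [:qv ^ (\<Sum>l<Suc n. l):] * EE K X (int r - 1) (Suc n) + [:qv ^ (n + Suc n * r):] * EE K X (int r) n"
proof -
  have z: "Cm K X (int r - 1) (Suc n) j = 0" if "j < n" for j
    using that by (simp add: Cm_def)
  have s: "Cm K X (int r - 1) (Suc n) n = [:qv ^ (n + Suc n * r):]"
  proof -
    have "qv powi (int (Suc n) * int r) = qv ^ (Suc n * r)" by (metis of_nat_mult power_int_of_nat)
    then show ?thesis by (simp add: Cm_def power_add mult_ac)
  qed
  have m: "(\<lambda>(l,j). [:qv ^ l:] * Cm K X (int r - 1) l j + Cm K X (int r - 1) (Suc l) j) = (\<lambda>(l,j). Cm K X (int r) l j)"
    using C_rec[of K X "int r"] by auto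
  have p: "(\<Prod>l<Suc n. [:qv ^ l:]) = [:qv ^ (\<Sum>l<Suc n. l):]"
    by (simp only: cp_prod[symmetric] power_sum)
  show ?thesis using hess_rec[of n "Cm K X (int r - 1)" "\<lambda>l. [:qv ^ l:]", OF z] unfolding m p s EE_def by simp
qed

lemma U0: "U 0 l j = (if l = j then 1 else 0)"
proof (cases "j < l")
  case False
  then obtain d where j: "j = l + d" using le_Suc_ex not_less by blast
  show ?thesis
  proof (cases d)
    case 0 then show ?thesis using j by simp
  next
    case (Suc e)
    then show ?thesis using j qbinom_zero[of 0 d] by (simp add: U_def)
  qed
qed simp

lemma R0: "EE K X (-1) (Suc n) * [:qv ^ (K * (\<Sum>l<Suc n. l)):] = X * EE K X (int K - 1) n"
proof -
  define C1 where "C1 = mat (Suc n) (Suc n) (\<lambda>(l,j). Cm K X (-1) l j)"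
  define Um where "Um = mat (Suc n) (Suc n) (\<lambda>(m,j). [:U (int K) m j:])"
  define Y where "Y = C1 * Um"
  have C1: "C1 \<in> carrier_mat (Suc n) (Suc n)" and Um: "Um \<in> carrier_mat (Suc n) (Suc n)"
    and Y: "Y \<in> carrier_mat (Suc n) (Suc n)" by (auto simp: C1_def Um_def Y_def)
  have detUm: "det Um = [:qv ^ (K * (\<Sum>l<Suc n. l)):]"
  proof -
    have "det Um = (\<Prod>l<Suc n. [:U (int K) l l:])"
      by (subst det_upper_triangular[OF _ Um]) (auto simp: Um_def prod_list_diag_prod atLeast0LessThan intro!: upper_triangularI)
    also have "\<dots> = (\<Prod>l<Suc n. [:qv ^ (K * l):])"
      by (rule prod.cong[OF refl]) (simp add: mult.commute flip: power_int_of_nat of_nat_mult)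
    also have "\<dots> = [:qv ^ (K * (\<Sum>l<Suc n. l)):]"
      by (simp only: cp_prod[symmetric] power_sum sum_distrib_left)
    finally show ?thesis .
  qed
  have Yij: "Y $$ (l,j) = X * [:if l = j then 1 else 0:] + [:if l = 0 then 0 else qv ^ (l - 1) * U (int K) (l - 1) j:]"
    if l: "l < Suc n" and j: "j < Suc n" for l j
  proof -
    have "Y $$ (l,j) = (\<Sum>m<Suc n. Cm K X (-1) l m * [:U (int K) m j:])"
      using l j by (simp add: Y_def C1_def Um_def scalar_prod_def atLeast0LessThan)
    also have "\<dots> = (\<Sum>m<Suc n. X * [:U (- int K) l m * U (int K) m j:] + [:(if l = Suc m then qv ^ m else 0) * U (int K) m j:])"
    proof (rule sum.cong[OF refl])
      fix m
      have cm: "Cm K X (-1) l m = [:U (- int K) l m:] * X + [:(if l = Suc m then qv ^ m else 0):]"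
        by (simp add: Cm_def U0)
      show "Cm K X (-1) l m * [:U (int K) m j:] = X * [:U (- int K) l m * U (int K) m j:] + [:(if l = Suc m then qv ^ m else 0) * U (int K) m j:]"
        unfolding cm cp_mult by (simp only: distrib_right distrib_left mult_ac)
    qed
    also have "\<dots> = X * [:\<Sum>m<Suc n. U (- int K) l m * U (int K) m j:] + [:\<Sum>m<Suc n. (if l = Suc m then qv ^ m else 0) * U (int K) m j:]"
      by (simp only: sum.distrib cp_sum sum_distrib_left)
    also have "(\<Sum>m<Suc n. U (- int K) l m * U (int K) m j) = (if l = j then 1 else 0)"
      by (rule U_inv[OF l j])
    also have "(\<Sum>m<Suc n. (if l = Suc m then qv ^ m else 0) * U (int K) m j) = (if l = 0 then 0 else qv ^ (l - 1) * U (int K) (l - 1) j)"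
    proof (cases l)
      case 0 then show ?thesis by simp
    next
      case (Suc l')
      have "(\<Sum>m<Suc n. (if l = Suc m then qv ^ m else 0) * U (int K) m j) = (\<Sum>m\<in>{l'}. (if l = Suc m then qv ^ m else 0) * U (int K) m j)"
        by (rule sum.mono_neutral_right) (use l Suc in auto)
      then show ?thesis using Suc by simp
    qed
    finally show ?thesis .
  qed
  have "det Y = Y $$ (0,0) * det (mat n n (\<lambda>(l,j). Y $$ (Suc l, Suc j)))"
    by (rule first_row_expand[OF Y]) (simp add: Yij)
  also have "Y $$ (0,0) = X" by (simp add: Yij)
  also have "mat n n (\<lambda>(l,j). Y $$ (Suc l, Suc j)) = mat n n (\<lambda>(l,j). [:qv ^ l:] * [:qv powi (- int j):] * Cm K X (int K - 1) l j)"
  proof (rule eq_matI)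
    fix l j assume "l < dim_row (mat n n (\<lambda>(l,j). [:qv ^ l:] * [:qv powi (- int j):] * Cm K X (int K - 1) l j))"
      "j < dim_col (mat n n (\<lambda>(l,j). [:qv ^ l:] * [:qv powi (- int j):] * Cm K X (int K - 1) l j))"
    hence l: "l < n" and j: "j < n" by auto
    have e1: "qv ^ l * qv powi (- int j) * qv ^ j = qv ^ l"
      by (simp add: power_int_minus field_simps)
    have e2: "l = j \<Longrightarrow> qv ^ l * qv powi (- int j) = 1"
      by (simp add: power_int_minus field_simps)
    show "mat n n (\<lambda>(l,j). Y $$ (Suc l, Suc j)) $$ (l,j) = mat n n (\<lambda>(l,j). [:qv ^ l:] * [:qv powi (- int j):] * Cm K X (int K - 1) l j) $$ (l,j)"
      using l j e1 e2 by (simp add: Yij Cm_def U0 cp_mult[symmetric] algebra_simps smult_add_right)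
  qed auto
  also have "det \<dots> = (\<Prod>l<n. [:qv ^ l:]) * (\<Prod>j<n. [:qv powi (- int j):]) * EE K X (int K - 1) n"
    unfolding EE_def by (rule det_diag_scale)
  also have "(\<Prod>l<n. [:qv ^ l:]) * (\<Prod>j<n. [:qv powi (- int j):]) = 1"
    by (simp add: prod.distrib[symmetric] cp_mult[symmetric] power_int_minus pCons_one flip: power_int_of_nat)
  finally have "det Y = X * EE K X (int K - 1) n" by simp
  moreover have "det Y = EE K X (-1) (Suc n) * [:qv ^ (K * (\<Sum>l<Suc n. l)):]"
    using det_mult[OF C1 Um] detUm unfolding Y_def EE_def C1_def by simp
  ultimately show ?thesis by simp
qed

lemma qbinom_diag: "qbinom (int i) (int i) = 1"
proof -
  have "pp (int i) i = dd i"
  proof (induct i)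
    case 0 then show ?case by (simp add: pp_def dd_def)
  next
    case (Suc i)
    have "pp (int (Suc i)) (Suc i) = (1 - qv powi int (Suc i)) * pp (int (Suc i) - 1) i" by (rule pp_Suc2)
    also have "\<dots> = (1 - qv ^ Suc i) * dd i"
    proof -
      have "int (Suc i) - 1 = int i" by simp
      then show ?thesis using Suc by (simp only: power_int_of_nat)
    qed
    also have "\<dots> = dd (Suc i)" by (simp add: dd_Suc mult.commute)
    finally show ?case .
  qed
  then show ?thesis by (simp add: qbinom_nat)
qed

lemma vsum: assumes "i < n"
  shows "(\<Sum>l<n. qbinom (int i) (int l) * U M l d) = qbinom (int i + M) (int d)"
proof -
  have "(\<Sum>l<n. qbinom (int i) (int l) * U M l d) = (\<Sum>l = 0..d. qbinom (int i) (int l) * U M l d)"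
    by (intro sum.mono_neutral_cong) (use assms qbinom_zero[of i] in auto)
  then show ?thesis by (simp add: vandermonde)
qed

lemma A_det: assumes "r < k"
  shows "det (A_mat n k r) = EE k (monom 1 k) (int r) n * [:qv ^ ((k - r - 1) * (\<Sum>j<n. j)):]"
proof -
  define X where "X = (monom 1 k :: qfield poly)"
  define P where "P = mat n n (\<lambda>(i,l). [:qbinom (int i) (int l):])"
  define C where "C = mat n n (\<lambda>(l,j). Cm k X (int r) l j)"
  have P: "P \<in> carrier_mat n n" and C: "C \<in> carrier_mat n n" by (auto simp: P_def C_def)
  have detP: "det P = 1"
  proof -
    have "det P = prod_list (diag_mat P)"
      by (rule det_lower_triangular[OF _ P]) (auto simp: P_def qbinom_zero)
    also have "\<dots> = 1" using P by (simp add: prod_list_diag_prod P_def pCons_one qbinom_diag)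
    finally show ?thesis .
  qed
  have PC: "(P * C) $$ (i,j) = X * [:qbinom (int i + (int r + 1 - int k)) (int j):] + [:qbinom (int i + (int r + 1)) (int (Suc j)) * qv ^ j:]"
    if i: "i < n" and j: "j < n" for i j
  proof -
    have "(P * C) $$ (i,j) = (\<Sum>l<n. [:qbinom (int i) (int l):] * Cm k X (int r) l j)"
      using i j by (simp add: P_def C_def scalar_prod_def atLeast0LessThan)
    also have "\<dots> = (\<Sum>l<n. X * [:qbinom (int i) (int l) * U (int r + 1 - int k) l j:] + [:qbinom (int i) (int l) * U (int r + 1) l (Suc j) * qv ^ j:])"
      by (rule sum.cong[OF refl]) (simp only: Cm_def cp_mult distrib_left mult_ac)
    also have "\<dots> = X * [:\<Sum>l<n. qbinom (int i) (int l) * U (int r + 1 - int k) l j:] + [:(\<Sum>l<n. qbinom (int i) (int l) * U (int r + 1) l (Suc j)) * qv ^ j:]"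
      by (simp only: sum.distrib cp_sum sum_distrib_left sum_distrib_right)
    also have "\<dots> = X * [:qbinom (int i + (int r + 1 - int k)) (int j):] + [:qbinom (int i + (int r + 1)) (int (Suc j)) * qv ^ j:]"
      unfolding vsum[OF i] by simp
    finally show ?thesis .
  qed
  have e: "qv ^ ((k - r) * j) = qv ^ ((k - r - 1) * j) * qv ^ j" for j
  proof -
    obtain s where ks: "k = Suc (r + s)" using less_imp_Suc_add[OF assms] by blast
    have "(k - r) * j = (k - r - 1) * j + j" unfolding ks by simp
    then show ?thesis by (simp only: power_add)
  qed
  have A: "A_mat n k r = mat n n (\<lambda>(i,j). 1 * [:qv ^ ((k - r - 1) * j):] * (P * C) $$ (i,j))"
  proof (rule eq_matI)
    fix i j assume "i < dim_row (mat n n (\<lambda>(i,j). 1 * [:qv ^ ((k - r - 1) * j):] * (P * C) $$ (i,j)))"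
      "j < dim_col (mat n n (\<lambda>(i,j). 1 * [:qv ^ ((k - r - 1) * j):] * (P * C) $$ (i,j)))"
    hence i: "i < n" and j: "j < n" by auto
    have a1: "int i - int k + int r + 1 = int i + (int r + 1 - int k)" by simp
    have a2: "int i + int r + 1 = int i + (int r + 1)" by simp
    have lhs: "A_mat n k r $$ (i,j) = smult (qv ^ ((k - r - 1) * j) * qbinom (int i + (int r + 1 - int k)) (int j)) X + [:qv ^ ((k - r - 1) * j) * (qbinom (int i + (int r + 1)) (int (Suc j)) * qv ^ j):]"
    proof -
      obtain s where ks: "k = Suc (r + s)" using less_imp_Suc_add[OF assms] by blast
      have x: "j * k - j * r = j + (j * k - (j + j * r))" unfolding ks by (simp add: algebra_simps)
      have e3: "qv ^ (j * k - j * r) = qv ^ j * qv ^ (j * k - (j + j * r))"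
        by (subst x) (simp only: power_add)
      show ?thesis using i j unfolding A_mat_def X_def by (simp add: e3 algebra_simps)
    qed
    have rhs: "mat n n (\<lambda>(i,j). 1 * [:qv ^ ((k - r - 1) * j):] * (P * C) $$ (i,j)) $$ (i,j) = [:qv ^ ((k - r - 1) * j):] * (X * [:qbinom (int i + (int r + 1 - int k)) (int j):] + [:qbinom (int i + (int r + 1)) (int (Suc j)) * qv ^ j:])"
      using i j PC by simp
    show "A_mat n k r $$ (i,j) = mat n n (\<lambda>(i,j). 1 * [:qv ^ ((k - r - 1) * j):] * (P * C) $$ (i,j)) $$ (i,j)"
      unfolding lhs rhs cp_lin ..
  qed (auto simp: A_mat_def)
  have "det (A_mat n k r) = (\<Prod>l<n. 1) * (\<Prod>j<n. [:qv ^ ((k - r - 1) * j):]) * det (mat n n (\<lambda>(i,j). (P * C) $$ (i,j)))"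
    unfolding A using det_diag_scale[of n "\<lambda>_. 1" "\<lambda>j. [:qv ^ ((k - r - 1) * j):]" "\<lambda>i j. (P * C) $$ (i,j)"] by simp
  also have "mat n n (\<lambda>(i,j). (P * C) $$ (i,j)) = P * C"
    by (rule eq_matI) (use P C in auto)
  also have "det (P * C) = EE k X (int r) n"
    using det_mult[OF P C] detP unfolding EE_def C_def by simp
  also have "(\<Prod>j<n. [:qv ^ ((k - r - 1) * j):]) = [:qv ^ ((k - r - 1) * (\<Sum>j<n. j)):]"
    by (simp only: cp_prod[symmetric] power_sum sum_distrib_left)
  finally show ?thesis by (simp add: X_def mult.commute)
qed

lemma cpow: "[:qv ^ a:] * [:qv ^ b:] = [:qv ^ (a + b):]"
  by (simp add: cp_mult[symmetric] power_add)

lemma qfib_step: assumes "k \<ge> 1" "N \<ge> k"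
  shows "qfib k N = monom 1 1 * qfib k (N - 1) + smult (qv ^ (N - k)) (qfib k (N - k))"
  using assms by (subst qfib.simps) (simp del: qfib.simps)

lemma qfib_small: assumes "N < k" shows "qfib k N = monom 1 N"
  using assms by (subst qfib.simps) (simp del: qfib.simps)

declare qfib.simps[simp del]

lemma main_ind:
  assumes k: "k \<ge> 1"
  shows "r < k \<Longrightarrow> monom 1 r * (EE k (monom 1 k) (int r) n * [:qv ^ ((k - r - 1) * (\<Sum>j<n. j)):]) = qfib k (k * n + r)"
proof (induct n arbitrary: r)
  case 0
  have "EE k (monom 1 k) (int r) 0 = 1" unfolding EE_def by (rule det_dim_zero) simp
  then show ?case using 0 by (simp add: qfib_small pCons_one)
next
  case (Suc m)
  define X where "X = (monom 1 k :: qfield poly)"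
  define T where "T = (\<Sum>j<m. j)"
  have TS: "(\<Sum>j<Suc m. j) = T + m" by (simp add: T_def)
  have IH: "\<And>r. r < k \<Longrightarrow> monom 1 r * (EE k X (int r) m * [:qv ^ ((k - r - 1) * T):]) = qfib k (k * m + r)"
    using Suc.hyps unfolding X_def T_def .
  show ?case using Suc.prems unfolding X_def[symmetric] TS
  proof (induct r)
    case 0
    obtain b where kb: "k = Suc b" using k by (cases k) auto
    have r1: "EE k X 0 (Suc m) = [:qv ^ (T + m):] * EE k X (-1) (Suc m) + [:qv ^ m:] * EE k X 0 m"
      using R1[of k X 0 m] by (simp add: T_def)
    have r0: "EE k X (-1) (Suc m) * [:qv ^ (k * (T + m)):] = X * EE k X (int b) m"
      using R0[of k X m] by (simp add: T_def kb)
    have ia: "monom 1 b * EE k X (int b) m = qfib k (k * m + b)"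
      using IH[of b] by (simp add: kb pCons_one)
    have ib: "EE k X 0 m * [:qv ^ (b * T):] = qfib k (k * m)"
      using IH[of 0] by (simp add: kb)
    have q: "qfib k (k * Suc m + 0) = monom 1 1 * qfib k (k * m + b) + smult (qv ^ (k * m)) (qfib k (k * m))"
      using qfib_step[of k "k * Suc m"] k by (simp add: kb ac_simps)
    have "monom 1 0 * (EE k X (int 0) (Suc m) * [:qv ^ ((k - 0 - 1) * (T + m)):])
      = ([:qv ^ (T + m):] * [:qv ^ (b * (T + m)):]) * EE k X (-1) (Suc m) + ([:qv ^ m:] * [:qv ^ (b * (T + m)):]) * EE k X 0 m"
    proof -
      have kk: "k - 0 - 1 = b" by (simp add: kb)
      show ?thesis unfolding kk of_nat_0 r1 by (simp add: pCons_one algebra_simps)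
    qed
    also have "[:qv ^ (T + m):] * [:qv ^ (b * (T + m)):] = [:qv ^ (k * (T + m)):]"
      unfolding cpow by (simp add: kb algebra_simps)
    also have "[:qv ^ m:] * [:qv ^ (b * (T + m)):] = [:qv ^ (k * m):] * [:qv ^ (b * T):]"
      unfolding cpow by (simp add: kb algebra_simps)
    also have "[:qv ^ (k * (T + m)):] * EE k X (-1) (Suc m) = monom 1 1 * (monom 1 b * EE k X (int b) m)"
      using r0 by (simp add: X_def kb mult_monom mult.commute mult.left_commute)
    also have "[:qv ^ (k * m):] * [:qv ^ (b * T):] * EE k X 0 m = smult (qv ^ (k * m)) (EE k X 0 m * [:qv ^ (b * T):])"
      by (simp add: mult.commute mult.left_commute)
    finally show ?case unfolding ia ib q by simp
  next
    case (Suc r')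
    obtain a where ka: "k = Suc (Suc (r' + a))" using Suc.prems less_imp_Suc_add by (metis add_Suc_shift add_Suc_right)
    have r1: "EE k X (int (Suc r')) (Suc m) = [:qv ^ (T + m):] * EE k X (int r') (Suc m) + [:qv ^ (m + Suc m * Suc r'):] * EE k X (int (Suc r')) m"
      using R1[of k X "Suc r'" m] by (simp add: T_def)
    have ia: "monom 1 r' * (EE k X (int r') (Suc m) * [:qv ^ ((k - r' - 1) * (T + m)):]) = qfib k (k * Suc m + r')"
      using Suc.hyps Suc.prems by simp
    have ib: "monom 1 (Suc r') * (EE k X (int (Suc r')) m * [:qv ^ ((k - Suc r' - 1) * T):]) = qfib k (k * m + Suc r')"
      using IH[of "Suc r'"] Suc.prems by simp
    have q: "qfib k (k * Suc m + Suc r') = monom 1 1 * qfib k (k * Suc m + r') + smult (qv ^ (k * m + Suc r')) (qfib k (k * m + Suc r'))"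
      using qfib_step[of k "k * Suc m + Suc r'"] k by (simp add: ka algebra_simps)
    have "monom 1 (Suc r') * (EE k X (int (Suc r')) (Suc m) * [:qv ^ ((k - Suc r' - 1) * (T + m)):])
      = monom 1 (Suc r') * ([:qv ^ (T + m):] * [:qv ^ (a * (T + m)):]) * EE k X (int r') (Suc m) + monom 1 (Suc r') * ([:qv ^ (m + Suc m * Suc r'):] * [:qv ^ (a * (T + m)):]) * EE k X (int (Suc r')) m"
    proof -
      have kk: "k - Suc r' - 1 = a" by (simp add: ka)
      show ?thesis unfolding kk r1 by (simp add: algebra_simps)
    qed
    also have "[:qv ^ (T + m):] * [:qv ^ (a * (T + m)):] = [:qv ^ ((k - r' - 1) * (T + m)):]"
      unfolding cpow by (simp add: ka algebra_simps)
    also have "[:qv ^ (m + Suc m * Suc r'):] * [:qv ^ (a * (T + m)):] = [:qv ^ (k * m + Suc r'):] * [:qv ^ ((k - Suc r' - 1) * T):]"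
      unfolding cpow by (simp add: ka algebra_simps)
    also have "monom 1 (Suc r') * [:qv ^ ((k - r' - 1) * (T + m)):] * EE k X (int r') (Suc m) = monom 1 1 * (monom 1 r' * (EE k X (int r') (Suc m) * [:qv ^ ((k - r' - 1) * (T + m)):]))"
    proof -
      have mm: "monom 1 (Suc r') = monom 1 1 * (monom 1 r' :: qfield poly)" by (simp add: mult_monom)
      show ?thesis unfolding mm by (simp only: mult_ac)
    qed
    also have "monom 1 (Suc r') * ([:qv ^ (k * m + Suc r'):] * [:qv ^ ((k - Suc r' - 1) * T):]) * EE k X (int (Suc r')) m = smult (qv ^ (k * m + Suc r')) (monom 1 (Suc r') * (EE k X (int (Suc r')) m * [:qv ^ ((k - Suc r' - 1) * T):]))"
      by (simp add: mult.commute mult.left_commute)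
    finally show ?case unfolding ia ib q .
  qed
qed

theorem theorem5:
  fixes k r n :: nat
  assumes "k \<ge> 1" and "r < k" and "n \<ge> 1"
  shows "monom 1 r * det (A_mat n k r) = qfib k (k * n + r)"
  using main_ind[OF assms(1) assms(2), of n] unfolding A_det[OF assms(2)] by simp

end
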